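(* Let $\lambda\in\mathbb{R}$, $a,b>0$ with $-b<\frac{\lambda}{2}<b$. (a) Let $\alpha,\beta>0$. If $X\sim\mathrm{K}(\lambda,a,b;1,\alpha^{-1})$ and $Y\sim\mathrm{K}(-\lambda,a,b;1,\beta^{-1})$ are independent and $(U,V)=\hat H_{II}^{\alpha,\beta}(X,Y)$, then $U,V$ are independent with $U\sim\mathrm{K}(-\lambda,a,b;1,\alpha^{-1})$ and $V\sim\mathrm{K}(\lambda,a,b;1,\beta^{-1})$. (b) If $X\sim\mathrm{K}^{(2)}(b+\frac{\lambda}{2},-\lambda,a)$ and $Y\sim\mathrm{Ga}(b-\frac{\lambda}{2},a)$ are independent and $(U,V)=F^+_{\mathrm{K\text{-}Ga},B}(X,Y)$, then $U,V$ are independent with $U\sim\mathrm{K}^{(2)}(b-\frac{\lambda}{2},\lambda,a)$ and $V\sim\mathrm{Ga}(b+\frac{\lambda}{2},a)$.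
   Context: $\mathbb{R}_+=(0,\infty)$. For $p,q>0$, $a>0$, $-b<\frac{\lambda}{2}$: $\mathrm{K}(\lambda,a,b;p,q)$ has density on $\mathbb{R}_+$ proportional to $x^{\lambda-1}e^{-apx}(1+qx^{-1})^{-b+\frac{\lambda}{2}}$. $\mathrm{K}^{(2)}(A,B,C)$ ($A,C>0$, $B\in\mathbb{R}$) has density proportional to $x^{A-1}(1+x)^{-A-B}e^{-Cx}$. $\mathrm{Ga}(A,C)$ ($A,C>0$) has density proportional to $x^{A-1}e^{-Cx}$. $\hat H_{II}^{\alpha,\beta}(x,y)=\left(\frac{y(1+\beta x+\beta y)}{1+\alpha x+\beta y},\ \frac{x(1+\alpha x+\alpha y)}{1+\alpha x+\beta y}\right)$ and $F^+_{\mathrm{K\text{-}Ga},B}(x,y)=\left(\frac{y}{1+x},\ \frac{x(1+x+y)}{1+x}\right)$, maps on $\mathbb{R}_+^2$. *)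

theory Defs
  imports "HOL-Probability.Probability"
begin

definition K_unnorm :: "real \<Rightarrow> real \<Rightarrow> real \<Rightarrow> real \<Rightarrow> real \<Rightarrow> real \<Rightarrow> real" where
  "K_unnorm l a b p q x = x powr (l - 1) * exp (- a * p * x) * (1 + q / x) powr (- b + l / 2)"

definition K_density :: "real \<Rightarrow> real \<Rightarrow> real \<Rightarrow> real \<Rightarrow> real \<Rightarrow> real \<Rightarrow> real" where
  "K_density l a b p q x =
     (if 0 < x then K_unnorm l a b p q x / (LINT t:{0<..}|lborel. K_unnorm l a b p q t) else 0)"

definition K2_unnorm :: "real \<Rightarrow> real \<Rightarrow> real \<Rightarrow> real \<Rightarrow> real" where
  "K2_unnorm A B C x = x powr (A - 1) * (1 + x) powr (- A - B) * exp (- C * x)"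

definition K2_density :: "real \<Rightarrow> real \<Rightarrow> real \<Rightarrow> real \<Rightarrow> real" where
  "K2_density A B C x =
     (if 0 < x then K2_unnorm A B C x / (LINT t:{0<..}|lborel. K2_unnorm A B C t) else 0)"

definition Ga_unnorm :: "real \<Rightarrow> real \<Rightarrow> real \<Rightarrow> real" where
  "Ga_unnorm A C x = x powr (A - 1) * exp (- C * x)"

definition Ga_density :: "real \<Rightarrow> real \<Rightarrow> real \<Rightarrow> real" where
  "Ga_density A C x =
     (if 0 < x then Ga_unnorm A C x / (LINT t:{0<..}|lborel. Ga_unnorm A C t) else 0)"

definition H_II :: "real \<Rightarrow> real \<Rightarrow> real \<times> real \<Rightarrow> real \<times> real" where
  "H_II \<alpha> \<beta> xy = (case xy of (x, y) \<Rightarrow>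
     (y * (1 + \<beta> * x + \<beta> * y) / (1 + \<alpha> * x + \<beta> * y),
      x * (1 + \<alpha> * x + \<alpha> * y) / (1 + \<alpha> * x + \<beta> * y)))"

definition F_KGa_B :: "real \<times> real \<Rightarrow> real \<times> real" where
  "F_KGa_B xy = (case xy of (x, y) \<Rightarrow> (y / (1 + x), x * (1 + x + y) / (1 + x)))"

end

theory Submission
  imports Defs
begin

definition psi :: "real \<Rightarrow> real \<Rightarrow> real \<Rightarrow> real \<Rightarrow> real" where
  "psi \<alpha> \<beta> s u = u * (1 + \<alpha> * s) / (1 + \<beta> * s - (\<beta> - \<alpha>) * u)"
definition dpsi :: "real \<Rightarrow> real \<Rightarrow> real \<Rightarrow> real \<Rightarrow> real" where
  "dpsi \<alpha> \<beta> s u = (1 + \<alpha> * s) * (1 + \<beta> * s) / (1 + \<beta> * s - (\<beta> - \<alpha>) * u)^2"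

lemma den_pos: fixes \<alpha> \<beta> u s :: real assumes "0 < \<alpha>" "0 \<le> \<beta>" "0 \<le> u" "u \<le> s"
  shows "0 < 1 + \<beta> * s - (\<beta> - \<alpha>) * u"
proof -
  have "1 + \<beta> * s - (\<beta> - \<alpha>) * u = 1 + \<beta> * (s - u) + \<alpha> * u" by (simp add: left_diff_distrib right_diff_distrib)
  moreover have "\<beta> * (s - u) \<ge> 0" "\<alpha> * u \<ge> 0" using assms by auto
  ultimately show ?thesis by linarith
qed

lemma psi_range: fixes \<alpha> \<beta> u s :: real assumes "0 < \<alpha>" "0 \<le> \<beta>" "0 \<le> u" "u \<le> s"
  shows "(0 < psi \<alpha> \<beta> s u \<and> psi \<alpha> \<beta> s u < s) \<longleftrightarrow> (0 < u \<and> u < s)"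
proof -
  define d where "d = 1 + \<beta> * s - (\<beta> - \<alpha>) * u"
  have d: "d > 0" using den_pos[OF assms] d_def by simp
  have s0: "s \<ge> 0" using assms by simp
  have p: "psi \<alpha> \<beta> s u = u * (1 + \<alpha> * s) / d" by (simp add: psi_def d_def)
  have "0 < psi \<alpha> \<beta> s u \<longleftrightarrow> 0 < u" using d assms s0
    by (simp add: p zero_less_divide_iff zero_less_mult_iff add_pos_nonneg)
  moreover have "psi \<alpha> \<beta> s u < s \<longleftrightarrow> u * (1 + \<alpha> * s) < s * d"
    using d by (simp add: p pos_divide_less_eq)
  moreover have "s * d - u * (1 + \<alpha> * s) = (s - u) * (1 + \<beta> * s)"
    by (simp add: d_def algebra_simps)
  moreover have "(s - u) * (1 + \<beta> * s) > 0 \<longleftrightarrow> u < s"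
    using assms s0 by (simp add: zero_less_mult_iff add_pos_nonneg)
  ultimately show ?thesis by linarith
qed

lemma psi_deriv: fixes \<alpha> \<beta> u s :: real assumes "0 < \<alpha>" "0 \<le> \<beta>" "0 \<le> u" "u \<le> s"
  shows "(psi \<alpha> \<beta> s has_real_derivative dpsi \<alpha> \<beta> s u) (at u)"
proof -
  have d: "1 + \<beta> * s - (\<beta> - \<alpha>) * u \<noteq> 0" using den_pos[OF assms] by simp
  show ?thesis unfolding psi_def[abs_def] dpsi_def
    apply (rule derivative_eq_intros refl)+
    using d apply (simp_all add: divide_simps power2_eq_square)
    apply (simp add: algebra_simps)
    done
qed

lemma fiber_subst:
  fixes G :: "real \<Rightarrow> real"
  assumes "0 < \<alpha>" "0 \<le> \<beta>" "0 < s" and G[measurable]: "G \<in> borel_measurable borel"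
  shows "(\<integral>\<^sup>+y. ennreal (G y * indicator {0<..<s} y) \<partial>lborel)
       = (\<integral>\<^sup>+u. ennreal (G (psi \<alpha> \<beta> s u) * dpsi \<alpha> \<beta> s u * indicator {0<..<s} u) \<partial>lborel)"
proof -
  let ?f = "\<lambda>y. G y * indicator {0<..<s} y"
  have p0: "psi \<alpha> \<beta> s 0 = 0" by (simp add: psi_def)
  have ps: "psi \<alpha> \<beta> s s = s"
  proof -
    have e: "1 + \<beta> * s - (\<beta> - \<alpha>) * s = 1 + \<alpha> * s" by (simp add: left_diff_distrib)
    have "1 + \<alpha> * s > 0" using assms by (simp add: add_pos_pos)
    then show ?thesis unfolding psi_def e by simp
  qed
  have "(\<integral>\<^sup>+y. ennreal (G y * indicator {0<..<s} y) \<partial>lborel)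
      = (\<integral>\<^sup>+y. ennreal (?f y * indicator {psi \<alpha> \<beta> s 0..psi \<alpha> \<beta> s s} y) \<partial>lborel)"
    by (intro nn_integral_cong) (auto simp: p0 ps split: split_indicator)
  also have "\<dots> = (\<integral>\<^sup>+u. ennreal (?f (psi \<alpha> \<beta> s u) * dpsi \<alpha> \<beta> s u * indicator {0..s} u) \<partial>lborel)"
  proof (rule nn_integral_substitution)
    show "set_borel_measurable borel {psi \<alpha> \<beta> s 0..psi \<alpha> \<beta> s s} ?f"
      unfolding set_borel_measurable_def by measurable
    show "\<And>x. x \<in> {0..s} \<Longrightarrow> (psi \<alpha> \<beta> s has_real_derivative dpsi \<alpha> \<beta> s x) (at x)"
      using psi_deriv assms by auto
    show "continuous_on {0..s} (dpsi \<alpha> \<beta> s)"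
    proof -
      have "\<forall>u\<in>{0..s}. 1 + \<beta> * s - (\<beta> - \<alpha>) * u \<noteq> 0"
        using den_pos[OF assms(1,2)] by force
      then show ?thesis unfolding dpsi_def by (intro continuous_intros) auto
    qed
    show "\<And>x. x \<in> {0..s} \<Longrightarrow> 0 \<le> dpsi \<alpha> \<beta> s x"
      unfolding dpsi_def using assms by (auto intro!: divide_nonneg_pos mult_nonneg_nonneg)
    show "0 \<le> s" using assms by simp
  qed
  also have "\<dots> = (\<integral>\<^sup>+u. ennreal (G (psi \<alpha> \<beta> s u) * dpsi \<alpha> \<beta> s u * indicator {0<..<s} u) \<partial>lborel)"
  proof (intro nn_integral_cong)
    fix u :: real
    show "ennreal (?f (psi \<alpha> \<beta> s u) * dpsi \<alpha> \<beta> s u * indicator {0..s} u)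
        = ennreal (G (psi \<alpha> \<beta> s u) * dpsi \<alpha> \<beta> s u * indicator {0<..<s} u)"
    proof (cases "0 \<le> u \<and> u \<le> s")
      case True
      then show ?thesis using psi_range[OF assms(1,2), of u s] by (auto split: split_indicator)
    qed (auto split: split_indicator)
  qed
  finally show ?thesis .
qed

definition Hinv :: "real \<Rightarrow> real \<Rightarrow> real \<times> real \<Rightarrow> real \<times> real" where
  "Hinv \<alpha> \<beta> uv = (case uv of (u, v) \<Rightarrow>
     (v * (1 + \<beta> * (u + v)) / (1 + \<alpha> * u + \<beta> * v), u * (1 + \<alpha> * (u + v)) / (1 + \<alpha> * u + \<beta> * v)))"
definition Jac :: "real \<Rightarrow> real \<Rightarrow> real \<Rightarrow> real \<Rightarrow> real" where
  "Jac \<alpha> \<beta> u v = (1 + \<alpha> * (u + v)) * (1 + \<beta> * (u + v)) / (1 + \<alpha> * u + \<beta> * v)^2"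

lemma ind_ioo: "indicator {a<..<b} x = (if a < x \<and> x < b then 1 else (0::real))"
  by (auto split: split_indicator)

lemma cov_H:
  fixes G :: "real \<times> real \<Rightarrow> real" and \<alpha> \<beta> :: real
  assumes "0 < \<alpha>" "0 \<le> \<beta>" and G[measurable]: "G \<in> borel_measurable (lborel \<Otimes>\<^sub>M lborel)"
  shows "(\<integral>\<^sup>+x. \<integral>\<^sup>+y. ennreal (G (x, y) * indicator {0<..} x * indicator {0<..} y) \<partial>lborel \<partial>lborel)
   = (\<integral>\<^sup>+u. \<integral>\<^sup>+v. ennreal (G (Hinv \<alpha> \<beta> (u, v)) * Jac \<alpha> \<beta> u v * indicator {0<..} u * indicator {0<..} v) \<partial>lborel \<partial>lborel)"
proof -
  have "(\<integral>\<^sup>+x. \<integral>\<^sup>+y. ennreal (G (x, y) * indicator {0<..} x * indicator {0<..} y) \<partial>lborel \<partial>lborel)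
      = (\<integral>\<^sup>+y. \<integral>\<^sup>+x. ennreal (G (x, y) * indicator {0<..} x * indicator {0<..} y) \<partial>lborel \<partial>lborel)"
    by (rule lborel_pair.Fubini'[symmetric]) measurable
  also have "\<dots> = (\<integral>\<^sup>+y. \<integral>\<^sup>+s. ennreal (G (s - y, y) * indicator {0<..} (s - y) * indicator {0<..} y) \<partial>lborel \<partial>lborel)"
  proof (rule nn_integral_cong)
    fix y :: real
    show "(\<integral>\<^sup>+x. ennreal (G (x, y) * indicator {0<..} x * indicator {0<..} y) \<partial>lborel)
        = (\<integral>\<^sup>+s. ennreal (G (s - y, y) * indicator {0<..} (s - y) * indicator {0<..} y) \<partial>lborel)"
    proof -
      have m: "(\<lambda>x. ennreal (G (x, y) * indicator {0<..} x * indicator {0<..} y)) \<in> borel_measurable borel"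
        by measurable
      show ?thesis using nn_integral_real_affine[OF m, where c=1 and t="-y"] by simp
    qed
  qed
  also have "\<dots> = (\<integral>\<^sup>+s. \<integral>\<^sup>+y. ennreal (G (s - y, y) * indicator {0<..<s} y) \<partial>lborel \<partial>lborel)"
    by (subst lborel_pair.Fubini') (measurable, auto intro!: nn_integral_cong split: split_indicator)
  also have "\<dots> = (\<integral>\<^sup>+s. \<integral>\<^sup>+u. ennreal (G (s - psi \<alpha> \<beta> s u, psi \<alpha> \<beta> s u) * dpsi \<alpha> \<beta> s u * indicator {0<..<s} u) \<partial>lborel \<partial>lborel)"
  proof (rule nn_integral_cong)
    fix s :: real
    show "(\<integral>\<^sup>+y. ennreal (G (s - y, y) * indicator {0<..<s} y) \<partial>lborel)
        = (\<integral>\<^sup>+u. ennreal (G (s - psi \<alpha> \<beta> s u, psi \<alpha> \<beta> s u) * dpsi \<alpha> \<beta> s u * indicator {0<..<s} u) \<partial>lborel)"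
    proof (cases "0 < s")
      case True
      show ?thesis by (rule fiber_subst[OF assms(1,2) True, of "\<lambda>y. G (s - y, y)"]) measurable
    next
      case False
      then have "\<And>y. indicator {0<..<s} y = (0::real)" by (auto split: split_indicator)
      then show ?thesis by simp
    qed
  qed
  also have "\<dots> = (\<integral>\<^sup>+u. \<integral>\<^sup>+s. ennreal (G (s - psi \<alpha> \<beta> s u, psi \<alpha> \<beta> s u) * dpsi \<alpha> \<beta> s u * indicator {0<..<s} u) \<partial>lborel \<partial>lborel)"
    by (rule lborel_pair.Fubini') (unfold psi_def dpsi_def ind_ioo, measurable)
  also have "\<dots> = (\<integral>\<^sup>+u. \<integral>\<^sup>+v. ennreal (G (Hinv \<alpha> \<beta> (u, v)) * Jac \<alpha> \<beta> u v * indicator {0<..} u * indicator {0<..} v) \<partial>lborel \<partial>lborel)"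
  proof (rule nn_integral_cong)
    fix u :: real
    have "(\<integral>\<^sup>+s. ennreal (G (s - psi \<alpha> \<beta> s u, psi \<alpha> \<beta> s u) * dpsi \<alpha> \<beta> s u * indicator {0<..<s} u) \<partial>lborel)
       = (\<integral>\<^sup>+v. ennreal (G (u + v - psi \<alpha> \<beta> (u + v) u, psi \<alpha> \<beta> (u + v) u) * dpsi \<alpha> \<beta> (u + v) u * indicator {0<..<u + v} u) \<partial>lborel)"
    proof -
      have m: "(\<lambda>s. ennreal (G (s - psi \<alpha> \<beta> s u, psi \<alpha> \<beta> s u) * dpsi \<alpha> \<beta> s u * indicator {0<..<s} u)) \<in> borel_measurable borel"
        unfolding psi_def dpsi_def ind_ioo by measurable
      show ?thesis using nn_integral_real_affine[OF m, where c=1 and t=u] by simp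
    qed
    also have "\<dots> = (\<integral>\<^sup>+v. ennreal (G (Hinv \<alpha> \<beta> (u, v)) * Jac \<alpha> \<beta> u v * indicator {0<..} u * indicator {0<..} v) \<partial>lborel)"
    proof (rule nn_integral_cong)
      fix v :: real
      show "ennreal (G (u + v - psi \<alpha> \<beta> (u + v) u, psi \<alpha> \<beta> (u + v) u) * dpsi \<alpha> \<beta> (u + v) u * indicator {0<..<u + v} u)
        = ennreal (G (Hinv \<alpha> \<beta> (u, v)) * Jac \<alpha> \<beta> u v * indicator {0<..} u * indicator {0<..} v)"
      proof (cases "0 < u \<and> 0 < v")
        case True
        have D: "1 + \<alpha> * u + \<beta> * v > 0"
          using True mult_pos_pos[OF assms(1), of u] mult_nonneg_nonneg[OF assms(2), of v] by linarith
        have e: "1 + \<beta> * (u + v) - (\<beta> - \<alpha>) * u = 1 + \<alpha> * u + \<beta> * v" by (simp add: algebra_simps)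
        have p: "psi \<alpha> \<beta> (u + v) u = u * (1 + \<alpha> * (u + v)) / (1 + \<alpha> * u + \<beta> * v)"
          unfolding psi_def e ..
        have q: "u + v - psi \<alpha> \<beta> (u + v) u = v * (1 + \<beta> * (u + v)) / (1 + \<alpha> * u + \<beta> * v)"
          unfolding p using D by (simp add: field_simps)
        have j: "dpsi \<alpha> \<beta> (u + v) u = Jac \<alpha> \<beta> u v" unfolding dpsi_def Jac_def e ..
        show ?thesis using True by (simp add: Hinv_def p[symmetric] q[symmetric] j)
      next
        case False
        then have "indicator {0<..<u + v} u = (0::real)" "indicator {0<..} u * indicator {0<..} v = (0::real)"
          by (auto split: split_indicator)
        then show ?thesis by (auto simp: mult.assoc)
      qed
    qed
    finally show "(\<integral>\<^sup>+s. ennreal (G (s - psi \<alpha> \<beta> s u, psi \<alpha> \<beta> s u) * dpsi \<alpha> \<beta> s u * indicator {0<..<s} u) \<partial>lborel)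
      = (\<integral>\<^sup>+v. ennreal (G (Hinv \<alpha> \<beta> (u, v)) * Jac \<alpha> \<beta> u v * indicator {0<..} u * indicator {0<..} v) \<partial>lborel)" .
  qed
  finally show ?thesis .
qed

lemma key_a:
  fixes \<alpha> \<beta> u v l a b :: real
  assumes \<alpha>: "0 < \<alpha>" and \<beta>: "0 < \<beta>" and u: "0 < u" and v: "0 < v"
  shows "K_unnorm l a b 1 (1 / \<alpha>) (v * (1+\<beta> * (u+v))/(1+\<alpha> * u+\<beta> * v))
       * K_unnorm (-l) a b 1 (1 / \<beta>) (u * (1+\<alpha> * (u+v))/(1+\<alpha> * u+\<beta> * v)) * Jac \<alpha> \<beta> u v
     = (\<beta> / \<alpha>) powr l * (K_unnorm (-l) a b 1 (1 / \<alpha>) u * K_unnorm l a b 1 (1 / \<beta>) v)"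
proof -
  define s1 where "s1 = 1 + \<alpha> * (u + v)"
  define s2 where "s2 = 1 + \<beta> * (u + v)"
  define D where "D = 1 + \<alpha> * u + \<beta> * v"
  define A1 where "A1 = 1 + \<alpha> * u"
  define B1 where "B1 = 1 + \<beta> * v"
  have au: "0 < \<alpha> * u" and bv: "0 < \<beta> * v" and av: "0 < \<alpha> * v" and bu: "0 < \<beta> * u"
    using \<alpha> \<beta> u v by simp_all
  have p: "0 < s1" "0 < s2" "0 < D" "0 < A1" "0 < B1"
    using au bv av bu by (simp_all add: s1_def s2_def D_def A1_def B1_def distrib_left)
  have i1: "\<alpha> * v * s2 + D = s1 * B1" by (simp add: s1_def s2_def D_def B1_def algebra_simps)
  have i2: "\<beta> * u * s1 + D = s2 * A1" by (simp add: s1_def s2_def D_def A1_def algebra_simps)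
  have q1: "1 + 1 / \<alpha> / (v * s2 / D) = s1 * B1 / (\<alpha> * v * s2)"
    unfolding i1[symmetric] using p \<alpha> v by (simp add: field_simps)
  have q2: "1 + 1 / \<beta> / (u * s1 / D) = s2 * A1 / (\<beta> * u * s1)"
    unfolding i2[symmetric] using p \<beta> u by (simp add: field_simps)
  have q3: "1 + 1 / \<alpha> / u = A1 / (\<alpha> * u)"
    using \<alpha> u by (simp add: field_simps A1_def)
  have q4: "1 + 1 / \<beta> / v = B1 / (\<beta> * v)"
    using \<beta> v by (simp add: field_simps B1_def)
  have sxy: "v * s2 / D + u * s1 / D = u + v"
  proof -
    have "v * s2 + u * s1 = (u + v) * D" by (simp add: s1_def s2_def D_def algebra_simps)
    then show ?thesis using p by (simp add: field_simps)
  qed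
  have ex: "exp (- a * 1 * (v * s2 / D)) * exp (- a * 1 * (u * s1 / D)) = exp (- a * 1 * u) * exp (- a * 1 * v)"
  proof -
    have "- a * 1 * (v * s2 / D) + - a * 1 * (u * s1 / D) = - a * (v * s2 / D + u * s1 / D)"
      by (simp add: algebra_simps)
    also have "\<dots> = - a * 1 * u + - a * 1 * v" unfolding sxy by (simp add: algebra_simps)
    finally show ?thesis unfolding exp_add[symmetric] by simp
  qed
  have J: "Jac \<alpha> \<beta> u v = s1 * s2 / D^2" by (simp add: Jac_def s1_def s2_def D_def)
  have L: "K_unnorm l a b 1 (1 / \<alpha>) (v * s2/D) * K_unnorm (-l) a b 1 (1 / \<beta>) (u * s1/D) * (s1 * s2 / D^2)
     = (v * s2/D) powr (l - 1) * (s1 * B1 / (\<alpha> * v * s2)) powr (- b + l / 2) *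
       (u * s1/D) powr (- l - 1) * (s2 * A1 / (\<beta> * u * s1)) powr (- b + - l / 2) * (s1 * s2 / D^2)
       * (exp (- a * 1 * u) * exp (- a * 1 * v))"
    unfolding K_unnorm_def q1 q2 ex[symmetric] by (simp add: ac_simps)
  have R: "(\<beta> / \<alpha>) powr l * (K_unnorm (-l) a b 1 (1 / \<alpha>) u * K_unnorm l a b 1 (1 / \<beta>) v)
     = (\<beta> / \<alpha>) powr l * (u powr (- l - 1) * (A1 / (\<alpha> * u)) powr (- b + - l / 2) *
        v powr (l - 1) * (B1 / (\<beta> * v)) powr (- b + l / 2)) * (exp (- a * 1 * u) * exp (- a * 1 * v))"
    unfolding K_unnorm_def q3 q4 by (simp add: ac_simps)
  have core: "(v * s2/D) powr (l - 1) * (s1 * B1 / (\<alpha> * v * s2)) powr (- b + l / 2) *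
       (u * s1/D) powr (- l - 1) * (s2 * A1 / (\<beta> * u * s1)) powr (- b + - l / 2) * (s1 * s2 / D^2)
     = (\<beta> / \<alpha>) powr l * (u powr (- l - 1) * (A1 / (\<alpha> * u)) powr (- b + - l / 2) *
        v powr (l - 1) * (B1 / (\<beta> * v)) powr (- b + l / 2))" (is "?A = ?B")
  proof -
    have "?A > 0" "?B > 0" using p \<alpha> \<beta> u v by simp_all
    moreover have "ln ?A = ln ?B"
      using p \<alpha> \<beta> u v by (simp add: ln_mult ln_div ln_powr power2_eq_square) (simp add: field_simps)
    ultimately show ?thesis by simp
  qed
  have hx: "v * (1+\<beta> * (u+v))/(1+\<alpha> * u+\<beta> * v) = v * s2/D" "u * (1+\<alpha> * (u+v))/(1+\<alpha> * u+\<beta> * v) = u * s1/D"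
    by (simp_all add: s1_def s2_def D_def)
  show ?thesis unfolding hx J L R core by simp
qed

lemma key_b:
  fixes u v l a b :: real
  assumes u: "0 < u" and v: "0 < v"
  shows "K2_unnorm (b + l / 2) (- l) a (fst (Hinv 1 0 (u, v))) * Ga_unnorm (b - l / 2) a (snd (Hinv 1 0 (u, v))) * Jac 1 0 u v
     = K2_unnorm (b - l / 2) l a u * Ga_unnorm (b + l / 2) a v"
proof -
  define s1 where "s1 = 1 + u + v"
  define A1 where "A1 = 1 + u"
  have p: "0 < s1" "0 < A1" using u v by (simp_all add: s1_def A1_def)
  have hx: "fst (Hinv 1 0 (u, v)) = v / A1" "snd (Hinv 1 0 (u, v)) = u * s1 / A1"
    by (simp_all add: Hinv_def s1_def A1_def add.assoc)
  have J: "Jac 1 0 u v = s1 / A1^2" by (simp add: Jac_def s1_def A1_def add.assoc)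
  have q1: "1 + v / A1 = s1 / A1" using p by (simp add: field_simps s1_def A1_def)
  have sxy: "v / A1 + u * s1 / A1 = u + v"
  proof -
    have "v + u * s1 = (u + v) * A1" by (simp add: s1_def A1_def algebra_simps)
    then show ?thesis using p by (simp add: field_simps)
  qed
  have ex: "exp (- a * (v / A1)) * exp (- a * (u * s1 / A1)) = exp (- a * u) * exp (- a * v)"
  proof -
    have "- a * (v / A1) + - a * (u * s1 / A1) = - a * (v / A1 + u * s1 / A1)"
      by (simp add: algebra_simps)
    also have "\<dots> = - a * u + - a * v" unfolding sxy by (simp add: algebra_simps)
    finally show ?thesis unfolding exp_add[symmetric] by simp
  qed
  have L: "K2_unnorm (b + l / 2) (- l) a (v / A1) * Ga_unnorm (b - l / 2) a (u * s1 / A1) * (s1 / A1^2)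
     = (v / A1) powr (b + l / 2 - 1) * (s1 / A1) powr (- (b + l / 2) - - l) * (u * s1 / A1) powr (b - l / 2 - 1)
       * (s1 / A1^2) * (exp (- a * u) * exp (- a * v))"
    unfolding K2_unnorm_def Ga_unnorm_def q1 ex[symmetric] by (simp add: ac_simps)
  have R: "K2_unnorm (b - l / 2) l a u * Ga_unnorm (b + l / 2) a v
     = u powr (b - l / 2 - 1) * A1 powr (- (b - l / 2) - l) * v powr (b + l / 2 - 1) * (exp (- a * u) * exp (- a * v))"
    unfolding K2_unnorm_def Ga_unnorm_def A1_def by (simp add: ac_simps)
  have core: "(v / A1) powr (b + l / 2 - 1) * (s1 / A1) powr (- (b + l / 2) - - l) * (u * s1 / A1) powr (b - l / 2 - 1)
       * (s1 / A1^2) = u powr (b - l / 2 - 1) * A1 powr (- (b - l / 2) - l) * v powr (b + l / 2 - 1)" (is "?A = ?B")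
  proof -
    have "?A > 0" "?B > 0" using p u v by simp_all
    moreover have "ln ?A = ln ?B"
      using p u v by (simp add: ln_mult ln_div ln_powr power2_eq_square) (simp add: field_simps)
    ultimately show ?thesis by simp
  qed
  show ?thesis unfolding hx J L R core by simp
qed

lemma prob_space_density_real:
  fixes g :: "real \<Rightarrow> real"
  assumes [measurable]: "g \<in> borel_measurable borel" and i: "(\<integral>\<^sup>+u. ennreal (g u) \<partial>lborel) = 1"
  shows "prob_space (density lborel (\<lambda>u. ennreal (g u)))"
proof (rule prob_spaceI)
  show "emeasure (density lborel (\<lambda>u. ennreal (g u))) (space (density lborel (\<lambda>u. ennreal (g u)))) = 1"
    using i by (simp add: emeasure_density)
qed

lemma assembly:
  fixes M :: "'s measure" and X Y :: "'s \<Rightarrow> real" and T :: "real \<times> real \<Rightarrow> real \<times> real"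
    and fX fY g1 g2 :: "real \<Rightarrow> real"
  assumes P: "prob_space M"
    and X: "distributed M lborel X (\<lambda>x. ennreal (fX x))"
    and Y: "distributed M lborel Y (\<lambda>y. ennreal (fY y))"
    and ind: "prob_space.indep_var M borel X borel Y"
    and T[measurable]: "T \<in> measurable (lborel \<Otimes>\<^sub>M lborel) (lborel \<Otimes>\<^sub>M lborel)"
    and fX0: "\<And>x. 0 \<le> fX x" and fY0: "\<And>x. 0 \<le> fY x"
    and g1[measurable]: "g1 \<in> borel_measurable borel" and g2[measurable]: "g2 \<in> borel_measurable borel"
    and g10: "\<And>x. 0 \<le> g1 x" and g20: "\<And>x. 0 \<le> g2 x"
    and i1: "(\<integral>\<^sup>+u. ennreal (g1 u) \<partial>lborel) = 1" and i2: "(\<integral>\<^sup>+u. ennreal (g2 u) \<partial>lborel) = 1"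
    and cov: "\<And>A. A \<in> sets (lborel \<Otimes>\<^sub>M lborel) \<Longrightarrow>
      (\<integral>\<^sup>+x. \<integral>\<^sup>+y. ennreal (indicator A (T (x, y)) * fX x * fY y) \<partial>lborel \<partial>lborel)
      = (\<integral>\<^sup>+u. \<integral>\<^sup>+v. ennreal (indicator A (u, v) * g1 u * g2 v) \<partial>lborel \<partial>lborel)"
  shows "prob_space.indep_var M borel (\<lambda>\<omega>. fst (T (X \<omega>, Y \<omega>))) borel (\<lambda>\<omega>. snd (T (X \<omega>, Y \<omega>)))
    \<and> distributed M lborel (\<lambda>\<omega>. fst (T (X \<omega>, Y \<omega>))) (\<lambda>u. ennreal (g1 u))
    \<and> distributed M lborel (\<lambda>\<omega>. snd (T (X \<omega>, Y \<omega>))) (\<lambda>u. ennreal (g2 u))"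
proof -
  interpret prob_space M by (rule P)
  have Xm[measurable]: "X \<in> measurable M lborel" using X by (rule distributed_measurable)
  have Ym[measurable]: "Y \<in> measurable M lborel" using Y by (rule distributed_measurable)
  have fXm[measurable]: "fX \<in> borel_measurable borel" using distributed_real_measurable[OF _ X] fX0 by simp
  have fYm[measurable]: "fY \<in> borel_measurable borel" using distributed_real_measurable[OF _ Y] fY0 by simp
  have dX: "distr M borel X = distr M lborel X" by (rule distr_cong) auto
  have dY: "distr M borel Y = distr M lborel Y" by (rule distr_cong) auto
  have indeq: "distr M borel X \<Otimes>\<^sub>M distr M borel Y = distr M (borel \<Otimes>\<^sub>M borel) (\<lambda>\<omega>. (X \<omega>, Y \<omega>))"
    using ind by (simp add: indep_var_distribution_eq)
  have jl: "distr M lborel X \<Otimes>\<^sub>M distr M lborel Y = distr M (lborel \<Otimes>\<^sub>M lborel) (\<lambda>\<omega>. (X \<omega>, Y \<omega>))"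
  proof -
    have "distr M (lborel \<Otimes>\<^sub>M lborel) (\<lambda>\<omega>. (X \<omega>, Y \<omega>)) = distr M (borel \<Otimes>\<^sub>M borel) (\<lambda>\<omega>. (X \<omega>, Y \<omega>))"
      by (rule distr_cong) (auto intro: sets_pair_measure_cong)
    then show ?thesis using indeq dX dY by simp
  qed
  have J: "distributed M (lborel \<Otimes>\<^sub>M lborel) (\<lambda>\<omega>. (X \<omega>, Y \<omega>)) (\<lambda>(x, y). ennreal (fX x) * ennreal (fY y))"
    by (rule distributed_joint_indep'[OF sigma_finite_lborel sigma_finite_lborel X Y jl])
  define W where "W = (\<lambda>\<omega>. T (X \<omega>, Y \<omega>))"
  have Wm[measurable]: "W \<in> measurable M (lborel \<Otimes>\<^sub>M lborel)" unfolding W_def by measurable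
  define D1 where "D1 = density lborel (\<lambda>u. ennreal (g1 u))"
  define D2 where "D2 = density lborel (\<lambda>u. ennreal (g2 u))"
  interpret D1: prob_space D1 unfolding D1_def by (rule prob_space_density_real[OF g1 i1])
  interpret D2: prob_space D2 unfolding D2_def by (rule prob_space_density_real[OF g2 i2])
  interpret D12: pair_prob_space D1 D2 ..
  define Q where "Q = density (lborel \<Otimes>\<^sub>M lborel) (\<lambda>(u, v). ennreal (g1 u) * ennreal (g2 v))"
  have dW: "distr M (lborel \<Otimes>\<^sub>M lborel) W = Q"
  proof -
    have "distr M (lborel \<Otimes>\<^sub>M lborel) W = distr (distr M (lborel \<Otimes>\<^sub>M lborel) (\<lambda>\<omega>. (X \<omega>, Y \<omega>))) (lborel \<Otimes>\<^sub>M lborel) T"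
      unfolding W_def by (subst distr_distr) (auto simp: comp_def)
    also have "\<dots> = distr (density (lborel \<Otimes>\<^sub>M lborel) (\<lambda>(x, y). ennreal (fX x) * ennreal (fY y))) (lborel \<Otimes>\<^sub>M lborel) T"
      using J by (simp add: distributed_distr_eq_density)
    also have "\<dots> = Q"
    proof (rule measure_eqI)
      show "sets (distr (density (lborel \<Otimes>\<^sub>M lborel) (\<lambda>(x, y). ennreal (fX x) * ennreal (fY y))) (lborel \<Otimes>\<^sub>M lborel) T) = sets Q"
        by (simp add: Q_def)
      fix A assume "A \<in> sets (distr (density (lborel \<Otimes>\<^sub>M lborel) (\<lambda>(x, y). ennreal (fX x) * ennreal (fY y))) (lborel \<Otimes>\<^sub>M lborel) T)"
      then have A[measurable]: "A \<in> sets (lborel \<Otimes>\<^sub>M lborel)" by simp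
      have m1: "(\<lambda>z. ennreal (indicator A (T z) * fX (fst z) * fY (snd z))) \<in> borel_measurable (lborel \<Otimes>\<^sub>M lborel)"
        by measurable
      have m2: "(\<lambda>z. ennreal (indicator A z * g1 (fst z) * g2 (snd z))) \<in> borel_measurable (lborel \<Otimes>\<^sub>M lborel)"
        by measurable
      have "emeasure (distr (density (lborel \<Otimes>\<^sub>M lborel) (\<lambda>(x, y). ennreal (fX x) * ennreal (fY y))) (lborel \<Otimes>\<^sub>M lborel) T) A
          = emeasure (density (lborel \<Otimes>\<^sub>M lborel) (\<lambda>(x, y). ennreal (fX x) * ennreal (fY y))) (T -` A \<inter> space (lborel \<Otimes>\<^sub>M lborel))"
        using T A by (subst emeasure_distr) (simp_all add: measurable_density_eq1)
      also have "\<dots> = (\<integral>\<^sup>+z. (\<lambda>(x, y). ennreal (fX x) * ennreal (fY y)) z * indicator (T -` A \<inter> space (lborel \<Otimes>\<^sub>M lborel)) z \<partial>(lborel \<Otimes>\<^sub>M lborel))"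
        by (rule emeasure_density) measurable
      also have "\<dots> = (\<integral>\<^sup>+z. ennreal (indicator A (T z) * fX (fst z) * fY (snd z)) \<partial>(lborel \<Otimes>\<^sub>M lborel))"
        by (intro nn_integral_cong) (auto simp: fX0 fY0 ennreal_mult space_pair_measure split: split_indicator)
      also have "\<dots> = (\<integral>\<^sup>+x. \<integral>\<^sup>+y. ennreal (indicator A (T (x, y)) * fX x * fY y) \<partial>lborel \<partial>lborel)"
        using lborel.nn_integral_fst[OF m1] by simp
      also have "\<dots> = (\<integral>\<^sup>+u. \<integral>\<^sup>+v. ennreal (indicator A (u, v) * g1 u * g2 v) \<partial>lborel \<partial>lborel)"
        by (rule cov[OF A])
      also have "\<dots> = (\<integral>\<^sup>+z. ennreal (indicator A z * g1 (fst z) * g2 (snd z)) \<partial>(lborel \<Otimes>\<^sub>M lborel))"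
        using lborel.nn_integral_fst[OF m2] by simp
      also have "\<dots> = (\<integral>\<^sup>+z. (\<lambda>(u, v). ennreal (g1 u) * ennreal (g2 v)) z * indicator A z \<partial>(lborel \<Otimes>\<^sub>M lborel))"
        by (intro nn_integral_cong) (auto simp: g10 g20 ennreal_mult split: split_indicator)
      also have "\<dots> = emeasure Q A"
        unfolding Q_def by (rule emeasure_density[symmetric]) measurable
      finally show "emeasure (distr (density (lborel \<Otimes>\<^sub>M lborel) (\<lambda>(x, y). ennreal (fX x) * ennreal (fY y))) (lborel \<Otimes>\<^sub>M lborel) T) A = emeasure Q A" .
    qed
    finally show ?thesis .
  qed
  have QD: "Q = D1 \<Otimes>\<^sub>M D2"
    unfolding Q_def D1_def D2_def
    by (rule pair_measure_density[symmetric]) (simp_all add: sigma_finite_lborel D2.sigma_finite_measure_axioms[unfolded D2_def])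
  have dU: "distr M lborel (\<lambda>\<omega>. fst (W \<omega>)) = D1"
  proof -
    have "distr M lborel (\<lambda>\<omega>. fst (W \<omega>)) = distr (distr M (lborel \<Otimes>\<^sub>M lborel) W) lborel fst"
      by (subst distr_distr) (auto simp: comp_def)
    also have "\<dots> = distr (D1 \<Otimes>\<^sub>M D2) D1 fst"
      unfolding dW QD by (rule distr_cong) (auto simp: D1_def)
    also have "\<dots> = D1" by (rule D2.distr_pair_fst)
    finally show ?thesis .
  qed
  have dV: "distr M lborel (\<lambda>\<omega>. snd (W \<omega>)) = D2"
  proof -
    interpret D21: pair_prob_space D2 D1 ..
    have "distr M lborel (\<lambda>\<omega>. snd (W \<omega>)) = distr (distr M (lborel \<Otimes>\<^sub>M lborel) W) lborel snd"
      by (subst distr_distr) (auto simp: comp_def)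
    also have "\<dots> = distr (D1 \<Otimes>\<^sub>M D2) D2 snd"
      unfolding dW QD by (rule distr_cong) (auto simp: D2_def)
    also have "\<dots> = distr (distr (D2 \<Otimes>\<^sub>M D1) (D1 \<Otimes>\<^sub>M D2) (\<lambda>(x, y). (y, x))) D2 snd"
      by (rule arg_cong[where f="\<lambda>N. distr N D2 snd", OF D12.distr_pair_swap])
    also have "\<dots> = distr (D2 \<Otimes>\<^sub>M D1) D2 fst"
      by (subst distr_distr) (auto simp: comp_def intro!: distr_cong)
    also have "\<dots> = D2" by (rule D1.distr_pair_fst)
    finally show ?thesis .
  qed
  have Um: "(\<lambda>\<omega>. fst (W \<omega>)) \<in> measurable M borel" using measurable_compose[OF Wm measurable_fst] by simp
  have Vm: "(\<lambda>\<omega>. snd (W \<omega>)) \<in> measurable M borel" using measurable_compose[OF Wm measurable_snd] by simp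
  have dist1: "distributed M lborel (\<lambda>\<omega>. fst (W \<omega>)) (\<lambda>u. ennreal (g1 u))"
    unfolding distributed_def using dU Um by (simp add: D1_def)
  have dist2: "distributed M lborel (\<lambda>\<omega>. snd (W \<omega>)) (\<lambda>u. ennreal (g2 u))"
    unfolding distributed_def using dV Vm by (simp add: D2_def)
  have indUV: "indep_var borel (\<lambda>\<omega>. fst (W \<omega>)) borel (\<lambda>\<omega>. snd (W \<omega>))"
  proof (subst indep_var_distribution_eq, intro conjI)
    show "random_variable borel (\<lambda>\<omega>. fst (W \<omega>))" "random_variable borel (\<lambda>\<omega>. snd (W \<omega>))"
      using Um Vm by auto
    have a: "distr M borel (\<lambda>\<omega>. fst (W \<omega>)) = D1" using dU by (subst distr_cong[of M M borel lborel]) auto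
    have b: "distr M borel (\<lambda>\<omega>. snd (W \<omega>)) = D2" using dV by (subst distr_cong[of M M borel lborel]) auto
    have c: "distr M (borel \<Otimes>\<^sub>M borel) (\<lambda>\<omega>. (fst (W \<omega>), snd (W \<omega>))) = distr M (lborel \<Otimes>\<^sub>M lborel) W"
      by (rule distr_cong) (auto intro: sets_pair_measure_cong)
    show "distr M borel (\<lambda>\<omega>. fst (W \<omega>)) \<Otimes>\<^sub>M distr M borel (\<lambda>\<omega>. snd (W \<omega>)) =
      distr M (borel \<Otimes>\<^sub>M borel) (\<lambda>\<omega>. (fst (W \<omega>), snd (W \<omega>)))"
      unfolding a b c dW QD ..
  qed
  show ?thesis using indUV dist1 dist2 unfolding W_def by simp
qed

lemma dbl_cmult:
  fixes F :: "real \<Rightarrow> real \<Rightarrow> real" and c :: real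
  assumes c: "0 \<le> c" and F0: "\<And>x y. 0 \<le> F x y"
    and Fm[measurable]: "(\<lambda>(x, y). F x y) \<in> borel_measurable (lborel \<Otimes>\<^sub>M lborel)"
  shows "(\<integral>\<^sup>+x. \<integral>\<^sup>+y. ennreal (c * F x y) \<partial>lborel \<partial>lborel) = ennreal c * (\<integral>\<^sup>+x. \<integral>\<^sup>+y. ennreal (F x y) \<partial>lborel \<partial>lborel)"
proof -
  have m1: "\<And>x. (\<lambda>y. ennreal (F x y)) \<in> borel_measurable lborel" by measurable
  have m2: "(\<lambda>x. \<integral>\<^sup>+y. ennreal (F x y) \<partial>lborel) \<in> borel_measurable lborel" by measurable
  have "(\<integral>\<^sup>+x. \<integral>\<^sup>+y. ennreal (c * F x y) \<partial>lborel \<partial>lborel) = (\<integral>\<^sup>+x. ennreal c * (\<integral>\<^sup>+y. ennreal (F x y) \<partial>lborel) \<partial>lborel)"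
    by (rule nn_integral_cong) (simp add: ennreal_mult c F0 nn_integral_cmult[OF m1])
  also have "\<dots> = ennreal c * (\<integral>\<^sup>+x. \<integral>\<^sup>+y. ennreal (F x y) \<partial>lborel \<partial>lborel)"
    by (rule nn_integral_cmult[OF m2])
  finally show ?thesis .
qed

lemma dbl_prod:
  fixes f g :: "real \<Rightarrow> real"
  assumes f0: "\<And>x. 0 \<le> f x" and g0: "\<And>x. 0 \<le> g x"
    and [measurable]: "f \<in> borel_measurable borel" "g \<in> borel_measurable borel"
  shows "(\<integral>\<^sup>+x. \<integral>\<^sup>+y. ennreal (f x * g y) \<partial>lborel \<partial>lborel) = (\<integral>\<^sup>+x. ennreal (f x) \<partial>lborel) * (\<integral>\<^sup>+y. ennreal (g y) \<partial>lborel)"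
proof -
  have m1: "(\<lambda>y. ennreal (g y)) \<in> borel_measurable lborel" by measurable
  have m2: "(\<lambda>x. ennreal (f x)) \<in> borel_measurable lborel" by measurable
  have "(\<integral>\<^sup>+x. \<integral>\<^sup>+y. ennreal (f x * g y) \<partial>lborel \<partial>lborel) = (\<integral>\<^sup>+x. ennreal (f x) * (\<integral>\<^sup>+y. ennreal (g y) \<partial>lborel) \<partial>lborel)"
    by (rule nn_integral_cong) (simp add: ennreal_mult f0 g0 nn_integral_cmult[OF m1])
  also have "\<dots> = (\<integral>\<^sup>+x. ennreal (f x) \<partial>lborel) * (\<integral>\<^sup>+y. ennreal (g y) \<partial>lborel)"
    by (rule nn_integral_multc[OF m2])
  finally show ?thesis .
qed

lemma norm_const:
  fixes k :: "real \<Rightarrow> real"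
  assumes k0: "\<And>x. 0 \<le> k x" and [measurable]: "k \<in> borel_measurable borel"
    and h: "(\<integral>\<^sup>+x. ennreal (k x / integral\<^sup>L lborel k) \<partial>lborel) = 1"
  shows "0 < integral\<^sup>L lborel k" "(\<integral>\<^sup>+x. ennreal (k x) \<partial>lborel) = ennreal (integral\<^sup>L lborel k)"
proof -
  define Z where "Z = integral\<^sup>L lborel k"
  show Zp: "0 < integral\<^sup>L lborel k"
  proof (rule ccontr)
    assume "\<not> 0 < integral\<^sup>L lborel k"
    then have "\<And>x. k x / Z \<le> 0" using k0 by (simp add: Z_def divide_nonneg_nonpos)
    then have "(\<integral>\<^sup>+x. ennreal (k x / integral\<^sup>L lborel k) \<partial>lborel) = 0"
      by (simp add: Z_def ennreal_neg)
    then show False using h by simp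
  qed
  have m: "(\<lambda>x. ennreal (k x)) \<in> borel_measurable lborel" by measurable
  have "(\<integral>\<^sup>+x. ennreal (k x / Z) \<partial>lborel) = (\<integral>\<^sup>+x. ennreal (1 / Z) * ennreal (k x) \<partial>lborel)"
    using Zp k0 by (intro nn_integral_cong) (simp add: Z_def ennreal_mult[symmetric])
  also have "\<dots> = ennreal (1 / Z) * (\<integral>\<^sup>+x. ennreal (k x) \<partial>lborel)" by (rule nn_integral_cmult[OF m])
  finally have e: "ennreal (1 / Z) * (\<integral>\<^sup>+x. ennreal (k x) \<partial>lborel) = 1" using h by (simp add: Z_def)
  have fin: "(\<integral>\<^sup>+x. ennreal (k x) \<partial>lborel) \<noteq> \<top>"
  proof
    assume "(\<integral>\<^sup>+x. ennreal (k x) \<partial>lborel) = \<top>"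
    then show False using e Zp by (simp add: Z_def ennreal_mult_top)
  qed
  then obtain r where r: "(\<integral>\<^sup>+x. ennreal (k x) \<partial>lborel) = ennreal r" "0 \<le> r"
    using ennreal_cases[of "(\<integral>\<^sup>+x. ennreal (k x) \<partial>lborel)"] by auto
  have a: "ennreal (1 / Z) * ennreal r = 1" using e r(1) by simp
  have b: "ennreal (1 / Z) * ennreal r = ennreal (1 / Z * r)" using Zp r(2) by (subst ennreal_mult) (auto simp: Z_def)
  have "ennreal (1 / Z * r) = ennreal 1" using a b by simp
  then have "1 / Z * r = 1" using Zp r(2) ennreal_inj[of "1 / Z * r" 1] by (auto simp: Z_def)
  then have "r = Z" using Zp by (simp add: Z_def field_simps)
  then show "(\<integral>\<^sup>+x. ennreal (k x) \<partial>lborel) = ennreal (integral\<^sup>L lborel k)" using r by (simp add: Z_def)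
qed

lemma fin_of_prod:
  fixes a b :: ennreal and C :: real
  assumes "ennreal C * (a * b) = ennreal z" "0 < C" "b \<noteq> 0"
  shows "a \<noteq> \<top>"
proof
  assume "a = \<top>"
  then have "a * b = \<top>" using assms(3) by (simp add: ennreal_mult_eq_top_iff)
  then have "ennreal C * (a * b) = \<top>" using assms(2) by (simp add: ennreal_mult_eq_top_iff)
  then show False using assms(1) by simp
qed

lemma normalize:
  fixes kX kY kU kV :: "real \<Rightarrow> real" and T :: "real \<times> real \<Rightarrow> real \<times> real" and C :: real
  assumes kX0: "\<And>x. 0 \<le> kX x" and kY0: "\<And>x. 0 \<le> kY x" and kU0: "\<And>x. 0 \<le> kU x" and kV0: "\<And>x. 0 \<le> kV x"
    and mX[measurable]: "kX \<in> borel_measurable borel" and mY[measurable]: "kY \<in> borel_measurable borel"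
    and mU[measurable]: "kU \<in> borel_measurable borel" and mV[measurable]: "kV \<in> borel_measurable borel"
    and T[measurable]: "T \<in> measurable (lborel \<Otimes>\<^sub>M lborel) (lborel \<Otimes>\<^sub>M lborel)"
    and C: "0 < C"
    and hX: "(\<integral>\<^sup>+x. ennreal (kX x / integral\<^sup>L lborel kX) \<partial>lborel) = 1"
    and hY: "(\<integral>\<^sup>+x. ennreal (kY x / integral\<^sup>L lborel kY) \<partial>lborel) = 1"
    and pU: "(\<integral>\<^sup>+x. ennreal (kU x) \<partial>lborel) \<noteq> 0" and pV: "(\<integral>\<^sup>+x. ennreal (kV x) \<partial>lborel) \<noteq> 0"
    and ucov: "\<And>A. A \<in> sets (lborel \<Otimes>\<^sub>M lborel) \<Longrightarrow>
      (\<integral>\<^sup>+x. \<integral>\<^sup>+y. ennreal (indicator A (T (x, y)) * kX x * kY y) \<partial>lborel \<partial>lborel)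
      = ennreal C * (\<integral>\<^sup>+u. \<integral>\<^sup>+v. ennreal (indicator A (u, v) * kU u * kV v) \<partial>lborel \<partial>lborel)"
  shows "(\<integral>\<^sup>+x. ennreal (kU x / integral\<^sup>L lborel kU) \<partial>lborel) = 1"
    "(\<integral>\<^sup>+x. ennreal (kV x / integral\<^sup>L lborel kV) \<partial>lborel) = 1"
    "\<And>A. A \<in> sets (lborel \<Otimes>\<^sub>M lborel) \<Longrightarrow>
      (\<integral>\<^sup>+x. \<integral>\<^sup>+y. ennreal (indicator A (T (x, y)) * (kX x / integral\<^sup>L lborel kX) * (kY y / integral\<^sup>L lborel kY)) \<partial>lborel \<partial>lborel)
      = (\<integral>\<^sup>+u. \<integral>\<^sup>+v. ennreal (indicator A (u, v) * (kU u / integral\<^sup>L lborel kU) * (kV v / integral\<^sup>L lborel kV)) \<partial>lborel \<partial>lborel)"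
proof -
  define ZX where "ZX = integral\<^sup>L lborel kX"
  define ZY where "ZY = integral\<^sup>L lborel kY"
  define ZU where "ZU = integral\<^sup>L lborel kU"
  define ZV where "ZV = integral\<^sup>L lborel kV"
  have ZX: "0 < ZX" "(\<integral>\<^sup>+x. ennreal (kX x) \<partial>lborel) = ennreal ZX"
    using norm_const[OF kX0 _ hX] by (simp_all add: ZX_def)
  have ZY: "0 < ZY" "(\<integral>\<^sup>+x. ennreal (kY x) \<partial>lborel) = ennreal ZY"
    using norm_const[OF kY0 _ hY] by (simp_all add: ZY_def)
  have "(\<integral>\<^sup>+x. \<integral>\<^sup>+y. ennreal (indicator UNIV (T (x, y)) * kX x * kY y) \<partial>lborel \<partial>lborel)
      = ennreal C * (\<integral>\<^sup>+u. \<integral>\<^sup>+v. ennreal (indicator UNIV (u, v) * kU u * kV v) \<partial>lborel \<partial>lborel)"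
    by (rule ucov) (use sets.top[of "lborel \<Otimes>\<^sub>M lborel"] in \<open>simp add: space_pair_measure\<close>)
  then have "(\<integral>\<^sup>+x. \<integral>\<^sup>+y. ennreal (kX x * kY y) \<partial>lborel \<partial>lborel)
      = ennreal C * (\<integral>\<^sup>+u. \<integral>\<^sup>+v. ennreal (kU u * kV v) \<partial>lborel \<partial>lborel)" by simp
  then have E: "ennreal C * ((\<integral>\<^sup>+x. ennreal (kU x) \<partial>lborel) * (\<integral>\<^sup>+x. ennreal (kV x) \<partial>lborel)) = ennreal (ZX * ZY)"
    unfolding dbl_prod[OF kX0 kY0 mX mY] dbl_prod[OF kU0 kV0 mU mV] ZX(2) ZY(2)
    using ZX ZY by (simp add: ennreal_mult)
  have fU: "(\<integral>\<^sup>+x. ennreal (kU x) \<partial>lborel) \<noteq> \<top>" by (rule fin_of_prod[OF E C pV])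
  have fV: "(\<integral>\<^sup>+x. ennreal (kV x) \<partial>lborel) \<noteq> \<top>" by (rule fin_of_prod[OF _ C pU]) (use E in \<open>simp add: mult.commute\<close>)
  obtain rU where rU: "(\<integral>\<^sup>+x. ennreal (kU x) \<partial>lborel) = ennreal rU" "0 \<le> rU"
    using fU ennreal_cases[of "(\<integral>\<^sup>+x. ennreal (kU x) \<partial>lborel)"] by auto
  obtain rV where rV: "(\<integral>\<^sup>+x. ennreal (kV x) \<partial>lborel) = ennreal rV" "0 \<le> rV"
    using fV ennreal_cases[of "(\<integral>\<^sup>+x. ennreal (kV x) \<partial>lborel)"] by auto
  have ZU: "ZU = rU" using nn_integral_eq_integrable[of kU lborel rU] rU kU0 by (simp add: ZU_def)
  have ZV: "ZV = rV" using nn_integral_eq_integrable[of kV lborel rV] rV kV0 by (simp add: ZV_def)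
  have ZUp: "0 < ZU" using pU rU ZU by (cases "rU = 0") auto
  have ZVp: "0 < ZV" using pV rV ZV by (cases "rV = 0") auto
  have "ennreal (C * (ZU * ZV)) = ennreal (ZX * ZY)"
    using E rU rV ZU ZV C by (simp add: ennreal_mult)
  then have R: "C * (ZU * ZV) = ZX * ZY"
    using C ZUp ZVp ZX ZY by (subst (asm) ennreal_inj) auto
  have one: "\<And>(k :: real \<Rightarrow> real) (Z :: real). 0 < Z \<Longrightarrow> (\<And>x. 0 \<le> k x) \<Longrightarrow> k \<in> borel_measurable borel \<Longrightarrow>
      (\<integral>\<^sup>+x. ennreal (k x) \<partial>lborel) = ennreal Z \<Longrightarrow> (\<integral>\<^sup>+x. ennreal (k x / Z) \<partial>lborel) = 1"
  proof -
    fix k :: "real \<Rightarrow> real" and Z :: real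
    assume Z: "0 < Z" and k0: "\<And>x. 0 \<le> k x" and km: "k \<in> borel_measurable borel"
      and kI: "(\<integral>\<^sup>+x. ennreal (k x) \<partial>lborel) = ennreal Z"
    have m: "(\<lambda>x. ennreal (k x)) \<in> borel_measurable lborel" using km by simp
    have "(\<integral>\<^sup>+x. ennreal (k x / Z) \<partial>lborel) = (\<integral>\<^sup>+x. ennreal (1 / Z) * ennreal (k x) \<partial>lborel)"
      using Z k0 by (intro nn_integral_cong) (simp add: ennreal_mult[symmetric])
    also have "\<dots> = ennreal (1 / Z) * ennreal Z" by (simp add: nn_integral_cmult[OF m] kI)
    also have "\<dots> = 1" using Z by (simp add: ennreal_mult[symmetric])
    finally show "(\<integral>\<^sup>+x. ennreal (k x / Z) \<partial>lborel) = 1" .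
  qed
  show "(\<integral>\<^sup>+x. ennreal (kU x / integral\<^sup>L lborel kU) \<partial>lborel) = 1"
    using one[OF ZUp kU0] rU ZU by (simp add: ZU_def)
  show "(\<integral>\<^sup>+x. ennreal (kV x / integral\<^sup>L lborel kV) \<partial>lborel) = 1"
    using one[OF ZVp kV0] rV ZV by (simp add: ZV_def)
  have eqc: "ennreal (1 / (ZX * ZY)) * ennreal C = ennreal (1 / (ZU * ZV))"
    using ZX ZY C R ZUp ZVp by (simp add: ennreal_mult[symmetric] field_simps)
  fix A :: "(real \<times> real) set" assume A[measurable]: "A \<in> sets (lborel \<Otimes>\<^sub>M lborel)"
  have "(\<integral>\<^sup>+x. \<integral>\<^sup>+y. ennreal (indicator A (T (x, y)) * (kX x / integral\<^sup>L lborel kX) * (kY y / integral\<^sup>L lborel kY)) \<partial>lborel \<partial>lborel)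
     = (\<integral>\<^sup>+x. \<integral>\<^sup>+y. ennreal (1 / (ZX * ZY) * (indicator A (T (x, y)) * kX x * kY y)) \<partial>lborel \<partial>lborel)"
    by (simp add: ZX_def ZY_def field_simps)
  also have "\<dots> = ennreal (1 / (ZX * ZY)) * (\<integral>\<^sup>+x. \<integral>\<^sup>+y. ennreal (indicator A (T (x, y)) * kX x * kY y) \<partial>lborel \<partial>lborel)"
    by (rule dbl_cmult) (use ZX ZY kX0 kY0 in auto)
  also have "\<dots> = ennreal (1 / (ZX * ZY)) * ennreal C * (\<integral>\<^sup>+u. \<integral>\<^sup>+v. ennreal (indicator A (u, v) * kU u * kV v) \<partial>lborel \<partial>lborel)"
    unfolding ucov[OF A] by (simp add: mult.assoc)
  also have "\<dots> = ennreal (1 / (ZU * ZV)) * (\<integral>\<^sup>+u. \<integral>\<^sup>+v. ennreal (indicator A (u, v) * kU u * kV v) \<partial>lborel \<partial>lborel)"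
    using eqc by simp
  also have "\<dots> = (\<integral>\<^sup>+u. \<integral>\<^sup>+v. ennreal (1 / (ZU * ZV) * (indicator A (u, v) * kU u * kV v)) \<partial>lborel \<partial>lborel)"
    by (rule dbl_cmult[symmetric]) (use ZUp ZVp kU0 kV0 in auto)
  also have "\<dots> = (\<integral>\<^sup>+u. \<integral>\<^sup>+v. ennreal (indicator A (u, v) * (kU u / integral\<^sup>L lborel kU) * (kV v / integral\<^sup>L lborel kV)) \<partial>lborel \<partial>lborel)"
    by (simp add: ZU_def ZV_def field_simps)
  finally show "(\<integral>\<^sup>+x. \<integral>\<^sup>+y. ennreal (indicator A (T (x, y)) * (kX x / integral\<^sup>L lborel kX) * (kY y / integral\<^sup>L lborel kY)) \<partial>lborel \<partial>lborel)
      = (\<integral>\<^sup>+u. \<integral>\<^sup>+v. ennreal (indicator A (u, v) * (kU u / integral\<^sup>L lborel kU) * (kV v / integral\<^sup>L lborel kV)) \<partial>lborel \<partial>lborel)" .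
qed

definition rs :: "(real \<Rightarrow> real) \<Rightarrow> real \<Rightarrow> real" where
  "rs f x = (if 0 < x then f x else 0)"

lemma rs_density:
  "(if 0 < x then f x / (LINT t:{0<..}|lborel. f t) else 0) = rs f x / integral\<^sup>L lborel (rs f)"
proof -
  have "(LINT t:{0<..}|lborel. f t) = integral\<^sup>L lborel (rs f)"
    unfolding set_lebesgue_integral_def by (rule Bochner_Integration.integral_cong) (auto simp: rs_def)
  then show ?thesis by (simp add: rs_def)
qed

lemma rs_meas[measurable]:
  assumes [measurable]: "f \<in> borel_measurable borel" shows "rs f \<in> borel_measurable borel"
  unfolding rs_def[abs_def] by measurable

lemma rs_nonneg: "(\<And>x. 0 < x \<Longrightarrow> 0 < f x) \<Longrightarrow> 0 \<le> rs f x"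
  unfolding rs_def by (auto intro: less_imp_le)

lemma rs_nn_pos:
  assumes [measurable]: "f \<in> borel_measurable borel" and pos: "\<And>x. 0 < x \<Longrightarrow> 0 < f x"
  shows "(\<integral>\<^sup>+x. ennreal (rs f x) \<partial>lborel) \<noteq> 0"
proof
  assume "(\<integral>\<^sup>+x. ennreal (rs f x) \<partial>lborel) = 0"
  then have ae: "AE x in lborel. ennreal (rs f x) = 0" by (subst (asm) nn_integral_0_iff_AE) measurable
  have imp: "\<And>x. ennreal (rs f x) = 0 \<Longrightarrow> \<not> (0 < x \<and> x < 1)"
    using pos by (fastforce simp: rs_def)
  have "AE x in lborel. \<not> (0 < (x::real) \<and> x < 1)"
  proof (rule AE_mp[OF ae])
    show "AE x in lborel. ennreal (rs f x) = 0 \<longrightarrow> \<not> (0 < x \<and> x < 1)"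
      using imp by (intro AE_I2) auto
  qed
  then have "emeasure lborel {0<..<(1::real)} = 0"
    by (subst (asm) AE_iff_measurable[where N="{0<..<1}"]) auto
  then show False by simp
qed

lemma distributed_total:
  assumes "prob_space M" "distributed M lborel X f"
  shows "(\<integral>\<^sup>+x. f x \<partial>lborel) = 1"
proof -
  interpret prob_space M by fact
  have fm[measurable]: "f \<in> borel_measurable lborel" using assms(2) by (rule distributed_borel_measurable)
  interpret D: prob_space "distr M lborel X"
    by (rule prob_space_distr) (rule distributed_measurable[OF assms(2)])
  have "1 = emeasure (distr M lborel X) (space lborel)" using D.emeasure_space_1 by simp
  also have "\<dots> = emeasure (density lborel f) UNIV" using assms(2) by (simp add: distributed_distr_eq_density)
  also have "\<dots> = (\<integral>\<^sup>+x. f x \<partial>lborel)" by (simp add: emeasure_density)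
  finally show ?thesis by simp
qed

lemma H_II_meas[measurable]: "H_II \<alpha> \<beta> \<in> measurable (lborel \<Otimes>\<^sub>M lborel) (lborel \<Otimes>\<^sub>M lborel)"
proof -
  have e: "H_II \<alpha> \<beta> = (\<lambda>z. (snd z * (1 + \<beta> * fst z + \<beta> * snd z) / (1 + \<alpha> * fst z + \<beta> * snd z),
      fst z * (1 + \<alpha> * fst z + \<alpha> * snd z) / (1 + \<alpha> * fst z + \<beta> * snd z)))"
    by (auto simp: H_II_def split: prod.split)
  show ?thesis unfolding e by measurable
qed

lemma frac_aux1: "(a::real) \<noteq> 0 \<Longrightarrow> b \<noteq> 0 \<Longrightarrow> D \<noteq> 0 \<Longrightarrow> y * b / (a * b / D) = y * D / a"
  by (simp add: field_simps)
lemma frac_aux2: "(a::real) \<noteq> 0 \<Longrightarrow> b \<noteq> 0 \<Longrightarrow> D \<noteq> 0 \<Longrightarrow> y * a / (a * b / D) = y * D / b"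
  by (simp add: field_simps)

lemma H_Hinv:
  fixes \<alpha> \<beta> u v :: real
  assumes "0 < \<alpha>" "0 \<le> \<beta>" "0 < u" "0 < v"
  shows "H_II \<alpha> \<beta> (Hinv \<alpha> \<beta> (u, v)) = (u, v)"
proof -
  define D where "D = 1 + \<alpha> * u + \<beta> * v"
  define x where "x = v * (1 + \<beta> * (u + v)) / D"
  define y where "y = u * (1 + \<alpha> * (u + v)) / D"
  have "0 < \<alpha> * u" "0 \<le> \<beta> * v" using assms by simp_all
  then have Dp: "0 < D" unfolding D_def by linarith
  have s: "x + y = u + v"
  proof -
    have eq: "v * (1 + \<beta> * (u + v)) + u * (1 + \<alpha> * (u + v)) = (u + v) * D" by (simp add: D_def algebra_simps)
    have "x + y = (v * (1 + \<beta> * (u + v)) + u * (1 + \<alpha> * (u + v))) / D" by (simp add: x_def y_def add_divide_distrib)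
    also have "\<dots> = (u + v) * D / D" by (simp only: eq)
    also have "\<dots> = u + v" using Dp by simp
    finally show ?thesis .
  qed
  have d: "D * (1 + \<alpha> * x + \<beta> * y) = (1 + \<alpha> * (u + v)) * (1 + \<beta> * (u + v))"
  proof -
    have dx: "D * x = v * (1 + \<beta> * (u + v))" "D * y = u * (1 + \<alpha> * (u + v))"
      using Dp by (simp_all add: x_def y_def)
    have "D * (1 + \<alpha> * x + \<beta> * y) = D + \<alpha> * (D * x) + \<beta> * (D * y)" by (simp add: algebra_simps)
    also have "\<dots> = (1 + \<alpha> * (u + v)) * (1 + \<beta> * (u + v))" unfolding dx by (simp add: D_def algebra_simps)
    finally show ?thesis .
  qed
  have d2: "1 + \<alpha> * x + \<beta> * y = (1 + \<alpha> * (u + v)) * (1 + \<beta> * (u + v)) / D"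
    using d Dp by (simp add: field_simps)
  have pos1: "0 < 1 + \<alpha> * (u + v)" "0 < 1 + \<beta> * (u + v)"
    using assms by (simp_all add: add_pos_nonneg)
  have "1 + \<beta> * x + \<beta> * y = 1 + \<beta> * (x + y)" by (simp add: algebra_simps)
  then have "1 + \<beta> * x + \<beta> * y = 1 + \<beta> * (u + v)" using s by simp
  moreover have "1 + \<alpha> * x + \<alpha> * y = 1 + \<alpha> * (x + y)" by (simp add: algebra_simps)
  then have "1 + \<alpha> * x + \<alpha> * y = 1 + \<alpha> * (u + v)" using s by simp
  ultimately have H: "H_II \<alpha> \<beta> (x, y) = (y * (1 + \<beta> * (u + v)) / (1 + \<alpha> * x + \<beta> * y), x * (1 + \<alpha> * (u + v)) / (1 + \<alpha> * x + \<beta> * y))"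
    by (simp add: H_II_def)
  have hx: "Hinv \<alpha> \<beta> (u, v) = (x, y)" by (simp add: Hinv_def x_def y_def D_def)
  have dy: "y * D = u * (1 + \<alpha> * (u + v))" "x * D = v * (1 + \<beta> * (u + v))"
    using Dp by (simp_all add: x_def y_def)
  have c1: "y * (1 + \<beta> * (u + v)) / ((1 + \<alpha> * (u + v)) * (1 + \<beta> * (u + v)) / D) = u"
  proof -
    have "y * (1 + \<beta> * (u + v)) / ((1 + \<alpha> * (u + v)) * (1 + \<beta> * (u + v)) / D)
        = (y * D) / (1 + \<alpha> * (u + v))" using Dp pos1 by (intro frac_aux1) auto
    also have "\<dots> = u" unfolding dy using pos1 by simp
    finally show ?thesis .
  qed
  have c2: "x * (1 + \<alpha> * (u + v)) / ((1 + \<alpha> * (u + v)) * (1 + \<beta> * (u + v)) / D) = v"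
  proof -
    have "x * (1 + \<alpha> * (u + v)) / ((1 + \<alpha> * (u + v)) * (1 + \<beta> * (u + v)) / D)
        = (x * D) / (1 + \<beta> * (u + v))" using Dp pos1 by (intro frac_aux2) auto
    also have "\<dots> = v" unfolding dy using pos1 by simp
    finally show ?thesis .
  qed
  show ?thesis by (simp only: hx H d2 c1 c2)
qed

lemma ucov_gen:
  fixes kX kY kU kV :: "real \<Rightarrow> real" and \<alpha> \<beta> C :: real and A :: "(real \<times> real) set"
  assumes \<alpha>: "0 < \<alpha>" and \<beta>: "0 \<le> \<beta>"
    and [measurable]: "kX \<in> borel_measurable borel" "kY \<in> borel_measurable borel"
      "kU \<in> borel_measurable borel" "kV \<in> borel_measurable borel"
    and C: "0 \<le> C" and kU0: "\<And>x. 0 < x \<Longrightarrow> 0 < kU x" and kV0: "\<And>x. 0 < x \<Longrightarrow> 0 < kV x"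
    and key: "\<And>u v. 0 < u \<Longrightarrow> 0 < v \<Longrightarrow>
      kX (fst (Hinv \<alpha> \<beta> (u, v))) * kY (snd (Hinv \<alpha> \<beta> (u, v))) * Jac \<alpha> \<beta> u v = C * (kU u * kV v)"
    and A[measurable]: "A \<in> sets (lborel \<Otimes>\<^sub>M lborel)"
  shows "(\<integral>\<^sup>+x. \<integral>\<^sup>+y. ennreal (indicator A (H_II \<alpha> \<beta> (x, y)) * rs kX x * rs kY y) \<partial>lborel \<partial>lborel)
    = ennreal C * (\<integral>\<^sup>+u. \<integral>\<^sup>+v. ennreal (indicator A (u, v) * rs kU u * rs kV v) \<partial>lborel \<partial>lborel)"
proof -
  define G where "G = (\<lambda>z. indicator A (H_II \<alpha> \<beta> z) * kX (fst z) * kY (snd z))"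
  have Gm: "G \<in> borel_measurable (lborel \<Otimes>\<^sub>M lborel)" unfolding G_def by measurable
  have "(\<integral>\<^sup>+x. \<integral>\<^sup>+y. ennreal (indicator A (H_II \<alpha> \<beta> (x, y)) * rs kX x * rs kY y) \<partial>lborel \<partial>lborel)
      = (\<integral>\<^sup>+x. \<integral>\<^sup>+y. ennreal (G (x, y) * indicator {0<..} x * indicator {0<..} y) \<partial>lborel \<partial>lborel)"
    by (intro nn_integral_cong) (simp add: G_def rs_def split: split_indicator)
  also have "\<dots> = (\<integral>\<^sup>+u. \<integral>\<^sup>+v. ennreal (G (Hinv \<alpha> \<beta> (u, v)) * Jac \<alpha> \<beta> u v * indicator {0<..} u * indicator {0<..} v) \<partial>lborel \<partial>lborel)"
    by (rule cov_H[OF \<alpha> \<beta> Gm])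
  also have "\<dots> = (\<integral>\<^sup>+u. \<integral>\<^sup>+v. ennreal (C * (indicator A (u, v) * rs kU u * rs kV v)) \<partial>lborel \<partial>lborel)"
  proof (intro nn_integral_cong)
    fix u v :: real
    show "ennreal (G (Hinv \<alpha> \<beta> (u, v)) * Jac \<alpha> \<beta> u v * indicator {0<..} u * indicator {0<..} v)
      = ennreal (C * (indicator A (u, v) * rs kU u * rs kV v))"
    proof (cases "0 < u \<and> 0 < v")
      case True
      have "G (Hinv \<alpha> \<beta> (u, v)) * Jac \<alpha> \<beta> u v
          = indicator A (u, v) * (kX (fst (Hinv \<alpha> \<beta> (u, v))) * kY (snd (Hinv \<alpha> \<beta> (u, v))) * Jac \<alpha> \<beta> u v)"
        using True by (simp add: G_def H_Hinv[OF \<alpha> \<beta>])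
      also have "\<dots> = C * (indicator A (u, v) * kU u * kV v)" using True by (simp add: key)
      finally show ?thesis using True by (simp add: rs_def)
    next
      case False
      then show ?thesis by (auto simp: rs_def split: split_indicator)
    qed
  qed
  also have "\<dots> = ennreal C * (\<integral>\<^sup>+u. \<integral>\<^sup>+v. ennreal (indicator A (u, v) * rs kU u * rs kV v) \<partial>lborel \<partial>lborel)"
    by (rule dbl_cmult) (use C rs_nonneg[OF kU0] rs_nonneg[OF kV0] in \<open>auto\<close>, measurable)
  finally show ?thesis .
qed

lemma K_unnorm_meas[measurable]: "K_unnorm l a b p q \<in> borel_measurable borel"
  unfolding K_unnorm_def[abs_def] by measurable
lemma K2_unnorm_meas[measurable]: "K2_unnorm A B C \<in> borel_measurable borel"
  unfolding K2_unnorm_def[abs_def] by measurable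
lemma Ga_unnorm_meas[measurable]: "Ga_unnorm A C \<in> borel_measurable borel"
  unfolding Ga_unnorm_def[abs_def] by measurable

lemma K_unnorm_pos: "0 < q \<Longrightarrow> 0 < x \<Longrightarrow> 0 < K_unnorm l a b p q x"
proof -
  assume q: "0 < q" and x: "0 < x"
  have "0 < 1 + q / x" using q x by (simp add: add_pos_pos)
  then show ?thesis using x by (simp add: K_unnorm_def)
qed
lemma K2_unnorm_pos: "0 < x \<Longrightarrow> 0 < K2_unnorm A B C x"
  by (simp add: K2_unnorm_def add_pos_pos)
lemma Ga_unnorm_pos: "0 < x \<Longrightarrow> 0 < Ga_unnorm A C x"
  by (simp add: Ga_unnorm_def)

lemma K_density_rs: "(\<lambda>x. ennreal (K_density l a b p q x)) = (\<lambda>x. ennreal (rs (K_unnorm l a b p q) x / integral\<^sup>L lborel (rs (K_unnorm l a b p q))))"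
  by (rule ext) (simp only: K_density_def rs_density)
lemma K2_density_rs: "(\<lambda>x. ennreal (K2_density A B C x)) = (\<lambda>x. ennreal (rs (K2_unnorm A B C) x / integral\<^sup>L lborel (rs (K2_unnorm A B C))))"
  by (rule ext) (simp only: K2_density_def rs_density)
lemma Ga_density_rs: "(\<lambda>x. ennreal (Ga_density A C x)) = (\<lambda>x. ennreal (rs (Ga_unnorm A C) x / integral\<^sup>L lborel (rs (Ga_unnorm A C))))"
  by (rule ext) (simp only: Ga_density_def rs_density)

lemma generic:
  fixes M :: "'s measure" and X Y :: "'s \<Rightarrow> real" and kX kY kU kV :: "real \<Rightarrow> real"
    and \<alpha> \<beta> C :: real
  assumes P: "prob_space M" and \<alpha>: "0 < \<alpha>" and \<beta>: "0 \<le> \<beta>" and C: "0 < C"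
    and mX[measurable]: "kX \<in> borel_measurable borel" and mY[measurable]: "kY \<in> borel_measurable borel"
    and mU[measurable]: "kU \<in> borel_measurable borel" and mV[measurable]: "kV \<in> borel_measurable borel"
    and pX: "\<And>x. 0 < x \<Longrightarrow> 0 < kX x" and pY: "\<And>x. 0 < x \<Longrightarrow> 0 < kY x"
    and pU: "\<And>x. 0 < x \<Longrightarrow> 0 < kU x" and pV: "\<And>x. 0 < x \<Longrightarrow> 0 < kV x"
    and key: "\<And>u v. 0 < u \<Longrightarrow> 0 < v \<Longrightarrow>
      kX (fst (Hinv \<alpha> \<beta> (u, v))) * kY (snd (Hinv \<alpha> \<beta> (u, v))) * Jac \<alpha> \<beta> u v = C * (kU u * kV v)"
    and hX: "distributed M lborel X (\<lambda>x. ennreal (rs kX x / integral\<^sup>L lborel (rs kX)))"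
    and hY: "distributed M lborel Y (\<lambda>x. ennreal (rs kY x / integral\<^sup>L lborel (rs kY)))"
    and ind: "prob_space.indep_var M borel X borel Y"
  shows "prob_space.indep_var M borel (\<lambda>\<omega>. fst (H_II \<alpha> \<beta> (X \<omega>, Y \<omega>))) borel (\<lambda>\<omega>. snd (H_II \<alpha> \<beta> (X \<omega>, Y \<omega>)))
    \<and> distributed M lborel (\<lambda>\<omega>. fst (H_II \<alpha> \<beta> (X \<omega>, Y \<omega>))) (\<lambda>x. ennreal (rs kU x / integral\<^sup>L lborel (rs kU)))
    \<and> distributed M lborel (\<lambda>\<omega>. snd (H_II \<alpha> \<beta> (X \<omega>, Y \<omega>))) (\<lambda>x. ennreal (rs kV x / integral\<^sup>L lborel (rs kV)))"
proof -
  have tX: "(\<integral>\<^sup>+x. ennreal (rs kX x / integral\<^sup>L lborel (rs kX)) \<partial>lborel) = 1"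
    by (rule distributed_total[OF P hX])
  have tY: "(\<integral>\<^sup>+x. ennreal (rs kY x / integral\<^sup>L lborel (rs kY)) \<partial>lborel) = 1"
    by (rule distributed_total[OF P hY])
  have nX: "\<And>x. 0 \<le> rs kX x" by (rule rs_nonneg[OF pX])
  have nY: "\<And>x. 0 \<le> rs kY x" by (rule rs_nonneg[OF pY])
  have nU: "\<And>x. 0 \<le> rs kU x" by (rule rs_nonneg[OF pU])
  have nV: "\<And>x. 0 \<le> rs kV x" by (rule rs_nonneg[OF pV])
  have ucov: "\<And>A. A \<in> sets (lborel \<Otimes>\<^sub>M lborel) \<Longrightarrow>
      (\<integral>\<^sup>+x. \<integral>\<^sup>+y. ennreal (indicator A (H_II \<alpha> \<beta> (x, y)) * rs kX x * rs kY y) \<partial>lborel \<partial>lborel)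
      = ennreal C * (\<integral>\<^sup>+u. \<integral>\<^sup>+v. ennreal (indicator A (u, v) * rs kU u * rs kV v) \<partial>lborel \<partial>lborel)"
    by (rule ucov_gen[OF \<alpha> \<beta> mX mY mU mV _ pU pV key]) (use C in auto)
  note N = normalize[OF nX nY nU nV rs_meas[OF mX] rs_meas[OF mY] rs_meas[OF mU] rs_meas[OF mV]
      H_II_meas C tX tY rs_nn_pos[OF mU pU] rs_nn_pos[OF mV pV] ucov]
  have ZX: "0 < integral\<^sup>L lborel (rs kX)" using norm_const(1)[OF nX rs_meas[OF mX] tX] .
  have ZY: "0 < integral\<^sup>L lborel (rs kY)" using norm_const(1)[OF nY rs_meas[OF mY] tY] .
  have ZU: "0 < integral\<^sup>L lborel (rs kU)" using norm_const(1)[OF nU rs_meas[OF mU] N(1)] .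
  have ZV: "0 < integral\<^sup>L lborel (rs kV)" using norm_const(1)[OF nV rs_meas[OF mV] N(2)] .
  show ?thesis
  proof (rule assembly[OF P hX hY ind H_II_meas])
    show "\<And>x. 0 \<le> rs kX x / integral\<^sup>L lborel (rs kX)" using nX ZX by simp
    show "\<And>x. 0 \<le> rs kY x / integral\<^sup>L lborel (rs kY)" using nY ZY by simp
    show "\<And>x. 0 \<le> rs kU x / integral\<^sup>L lborel (rs kU)" using nU ZU by simp
    show "\<And>x. 0 \<le> rs kV x / integral\<^sup>L lborel (rs kV)" using nV ZV by simp
    show "(\<lambda>x. rs kU x / integral\<^sup>L lborel (rs kU)) \<in> borel_measurable borel" by measurable
    show "(\<lambda>x. rs kV x / integral\<^sup>L lborel (rs kV)) \<in> borel_measurable borel" by measurable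
    show "(\<integral>\<^sup>+u. ennreal (rs kU u / integral\<^sup>L lborel (rs kU)) \<partial>lborel) = 1" by (rule N(1))
    show "(\<integral>\<^sup>+u. ennreal (rs kV u / integral\<^sup>L lborel (rs kV)) \<partial>lborel) = 1" by (rule N(2))
    show "\<And>A. A \<in> sets (lborel \<Otimes>\<^sub>M lborel) \<Longrightarrow>
      (\<integral>\<^sup>+x. \<integral>\<^sup>+y. ennreal (indicator A (H_II \<alpha> \<beta> (x, y)) * (rs kX x / integral\<^sup>L lborel (rs kX)) * (rs kY y / integral\<^sup>L lborel (rs kY))) \<partial>lborel \<partial>lborel)
      = (\<integral>\<^sup>+u. \<integral>\<^sup>+v. ennreal (indicator A (u, v) * (rs kU u / integral\<^sup>L lborel (rs kU)) * (rs kV v / integral\<^sup>L lborel (rs kV))) \<partial>lborel \<partial>lborel)"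
      by (rule N(3))
  qed
qed

lemma F_eq: "F_KGa_B = H_II 1 0"
  by (rule ext) (auto simp: F_KGa_B_def H_II_def split: prod.split)

theorem corollary5p2:
  fixes M :: "'s measure" and l a b :: real
  assumes "prob_space M"
    and "0 < a" and "0 < b" and "- b < l / 2" and "l / 2 < b"
  shows
    "(\<forall>\<alpha> \<beta> (X :: 's \<Rightarrow> real) (Y :: 's \<Rightarrow> real). 0 < \<alpha> \<longrightarrow> 0 < \<beta> \<longrightarrow>
        distributed M lborel X (\<lambda>x. ennreal (K_density l a b 1 (1 / \<alpha>) x)) \<longrightarrow>
        distributed M lborel Y (\<lambda>y. ennreal (K_density (- l) a b 1 (1 / \<beta>) y)) \<longrightarrow>
        prob_space.indep_var M borel X borel Y \<longrightarrow>
        (let U = (\<lambda>\<omega>. fst (H_II \<alpha> \<beta> (X \<omega>, Y \<omega>)));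
             V = (\<lambda>\<omega>. snd (H_II \<alpha> \<beta> (X \<omega>, Y \<omega>)))
         in prob_space.indep_var M borel U borel V \<and>
            distributed M lborel U (\<lambda>u. ennreal (K_density (- l) a b 1 (1 / \<alpha>) u)) \<and>
            distributed M lborel V (\<lambda>v. ennreal (K_density l a b 1 (1 / \<beta>) v))))
   \<and> (\<forall>(X :: 's \<Rightarrow> real) (Y :: 's \<Rightarrow> real).
        distributed M lborel X (\<lambda>x. ennreal (K2_density (b + l / 2) (- l) a x)) \<longrightarrow>
        distributed M lborel Y (\<lambda>y. ennreal (Ga_density (b - l / 2) a y)) \<longrightarrow>
        prob_space.indep_var M borel X borel Y \<longrightarrow>
        (let U = (\<lambda>\<omega>. fst (F_KGa_B (X \<omega>, Y \<omega>)));
             V = (\<lambda>\<omega>. snd (F_KGa_B (X \<omega>, Y \<omega>)))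
         in prob_space.indep_var M borel U borel V \<and>
            distributed M lborel U (\<lambda>u. ennreal (K2_density (b - l / 2) l a u)) \<and>
            distributed M lborel V (\<lambda>v. ennreal (Ga_density (b + l / 2) a v))))"
proof (intro conjI allI impI)
  fix \<alpha> \<beta> :: real and X Y :: "'s \<Rightarrow> real"
  assume \<alpha>: "0 < \<alpha>" and \<beta>: "0 < \<beta>"
    and hX: "distributed M lborel X (\<lambda>x. ennreal (K_density l a b 1 (1 / \<alpha>) x))"
    and hY: "distributed M lborel Y (\<lambda>y. ennreal (K_density (- l) a b 1 (1 / \<beta>) y))"
    and ind: "prob_space.indep_var M borel X borel Y"
  have key: "\<And>u v. 0 < u \<Longrightarrow> 0 < v \<Longrightarrow>
      K_unnorm l a b 1 (1 / \<alpha>) (fst (Hinv \<alpha> \<beta> (u, v))) * K_unnorm (- l) a b 1 (1 / \<beta>) (snd (Hinv \<alpha> \<beta> (u, v))) * Jac \<alpha> \<beta> u v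
      = (\<beta> / \<alpha>) powr l * (K_unnorm (- l) a b 1 (1 / \<alpha>) u * K_unnorm l a b 1 (1 / \<beta>) v)"
    using key_a[OF \<alpha> \<beta>] by (simp add: Hinv_def)
  have "prob_space.indep_var M borel (\<lambda>\<omega>. fst (H_II \<alpha> \<beta> (X \<omega>, Y \<omega>))) borel (\<lambda>\<omega>. snd (H_II \<alpha> \<beta> (X \<omega>, Y \<omega>)))
    \<and> distributed M lborel (\<lambda>\<omega>. fst (H_II \<alpha> \<beta> (X \<omega>, Y \<omega>))) (\<lambda>x. ennreal (K_density (- l) a b 1 (1 / \<alpha>) x))
    \<and> distributed M lborel (\<lambda>\<omega>. snd (H_II \<alpha> \<beta> (X \<omega>, Y \<omega>))) (\<lambda>x. ennreal (K_density l a b 1 (1 / \<beta>) x))"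
    unfolding K_density_rs
    by (rule generic[OF assms(1) \<alpha> _ _ K_unnorm_meas K_unnorm_meas K_unnorm_meas K_unnorm_meas
        K_unnorm_pos K_unnorm_pos K_unnorm_pos K_unnorm_pos key hX[unfolded K_density_rs] hY[unfolded K_density_rs] ind])
      (use \<alpha> \<beta> in auto)
  then show "let U = (\<lambda>\<omega>. fst (H_II \<alpha> \<beta> (X \<omega>, Y \<omega>)));
             V = (\<lambda>\<omega>. snd (H_II \<alpha> \<beta> (X \<omega>, Y \<omega>)))
         in prob_space.indep_var M borel U borel V \<and>
            distributed M lborel U (\<lambda>u. ennreal (K_density (- l) a b 1 (1 / \<alpha>) u)) \<and>
            distributed M lborel V (\<lambda>v. ennreal (K_density l a b 1 (1 / \<beta>) v))"
    by (simp add: Let_def)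
next
  fix X Y :: "'s \<Rightarrow> real"
  assume hX: "distributed M lborel X (\<lambda>x. ennreal (K2_density (b + l / 2) (- l) a x))"
    and hY: "distributed M lborel Y (\<lambda>y. ennreal (Ga_density (b - l / 2) a y))"
    and ind: "prob_space.indep_var M borel X borel Y"
  have key: "\<And>u v. 0 < u \<Longrightarrow> 0 < v \<Longrightarrow>
      K2_unnorm (b + l / 2) (- l) a (fst (Hinv 1 0 (u, v))) * Ga_unnorm (b - l / 2) a (snd (Hinv 1 0 (u, v))) * Jac 1 0 u v
      = 1 * (K2_unnorm (b - l / 2) l a u * Ga_unnorm (b + l / 2) a v)"
    using key_b by simp
  have "prob_space.indep_var M borel (\<lambda>\<omega>. fst (H_II 1 0 (X \<omega>, Y \<omega>))) borel (\<lambda>\<omega>. snd (H_II 1 0 (X \<omega>, Y \<omega>)))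
    \<and> distributed M lborel (\<lambda>\<omega>. fst (H_II 1 0 (X \<omega>, Y \<omega>))) (\<lambda>x. ennreal (K2_density (b - l / 2) l a x))
    \<and> distributed M lborel (\<lambda>\<omega>. snd (H_II 1 0 (X \<omega>, Y \<omega>))) (\<lambda>x. ennreal (Ga_density (b + l / 2) a x))"
    unfolding K2_density_rs Ga_density_rs
    by (rule generic[OF assms(1) _ _ _ K2_unnorm_meas Ga_unnorm_meas K2_unnorm_meas Ga_unnorm_meas
        K2_unnorm_pos Ga_unnorm_pos K2_unnorm_pos Ga_unnorm_pos key hX[unfolded K2_density_rs] hY[unfolded Ga_density_rs] ind])
      auto
  then show "let U = (\<lambda>\<omega>. fst (F_KGa_B (X \<omega>, Y \<omega>)));
             V = (\<lambda>\<omega>. snd (F_KGa_B (X \<omega>, Y \<omega>)))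
         in prob_space.indep_var M borel U borel V \<and>
            distributed M lborel U (\<lambda>u. ennreal (K2_density (b - l / 2) l a u)) \<and>
            distributed M lborel V (\<lambda>v. ennreal (Ga_density (b + l / 2) a v))"
    by (simp add: Let_def F_eq)
qed

end
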